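(* Let $X$ be a real Hilbert space, let $n\in\{3,4,\ldots\}$, let $U_1,\ldots,U_n$ be closed linear subspaces of $X$, $P_i := P_{U_i}$, and $Z := U_1\cap\cdots\cap U_n$. Define $M\colon X^{n-1}\to X^n$ by $M(z_1,\ldots,z_{n-1}) = (x_1,\ldots,x_n)$, where $x_1 = P_1 z_1$, $x_i = P_i(x_{i-1}+z_i-z_{i-1})$ for $2\le i\le n-1$, and $x_n = P_n(x_1+x_{n-1}-z_{n-1})$. Writing $Q_i\colon X^n\to X$ for the $i$-th coordinate map, define $T\colon X^{n-1}\to X^{n-1}$ by \[ T\mathbf z = \mathbf z + \big((Q_2-Q_1)M\mathbf z,\,(Q_3-Q_2)M\mathbf z,\,\ldots,\,(Q_n-Q_{n-1})M\mathbf z\big). \] Let $0<\lambda<1$ and $\mathbf z_0=(z_{0,1},\ldots,z_{0,n-1})\in X^{n-1}$, generate $\mathbf z_{k+1} = (1-\lambda)\mathbf z_k+\lambda T\mathbf z_k$, and set $p := \frac{1}{n-1}(z_{0,1}+\cdots+z_{0,n-1})$. Then there exists $\bar{\mathbf z}\in X^{n-1}$ such that $\mathbf z_k\to\bar{\mathbf z}\in\operatorname{Fix}T$ (in norm) and \[ M\mathbf z_k\to M\bar{\mathbf z} = (P_Zp,\ldots,P_Zp)\in X^n. \] In particular, with $Q_1$ also denoting the first-coordinate map on $X^{n-1}$, $P_1(Q_1\mathbf z_k) = Q_1M\mathbf z_k\to P_Z(p)=\frac{1}{n-1}P_Z(z_{0,1}+\cdots+z_{0,n-1})$. Consequently, if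 $x_0\in X$ and $\mathbf z_0=(x_0,\ldots,x_0)$, then $P_1Q_1\mathbf z_k\to P_Zx_0$.
   Context: $P_S$ denotes the orthogonal projection onto a closed linear subspace $S$; $\operatorname{Fix}T$ is the fixed point set of $T$. The map $M$ is the Malitsky-Tam splitting map specialized to the normal cone operators $A_i=N_{U_i}$, whose resolvents are $P_i$. *)

theory Defs
  imports "HOL-Analysis.Analysis"
begin

definition orth_proj :: "'a::real_inner set \<Rightarrow> 'a \<Rightarrow> 'a" where
  "orth_proj U x = (THE y. y \<in> U \<and> (\<forall>u\<in>U. inner (x - y) u = 0))"

text \<open>Coordinates x_1, ..., x_{n-1} of M z (indices start at 1; P i is the i-th projection).\<close>
fun mt_x :: "(nat \<Rightarrow> 'a \<Rightarrow> 'a::real_vector) \<Rightarrow> (nat \<Rightarrow> 'a) \<Rightarrow> nat \<Rightarrow> 'a" where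
  "mt_x P z 0 = 0"
| "mt_x P z (Suc 0) = P 1 (z 1)"
| "mt_x P z (Suc (Suc j)) = P (Suc (Suc j)) (mt_x P z (Suc j) + z (Suc (Suc j)) - z (Suc j))"

text \<open>The Malitsky-Tam map M : X^(n-1) -> X^n, vectors represented as functions on
  indices {1..n-1} resp. {1..n}.\<close>
definition mt_M :: "nat \<Rightarrow> (nat \<Rightarrow> 'a \<Rightarrow> 'a::real_vector) \<Rightarrow> (nat \<Rightarrow> 'a) \<Rightarrow> nat \<Rightarrow> 'a" where
  "mt_M n P z i = (if i = n then P n (mt_x P z 1 + mt_x P z (n - 1) - z (n - 1)) else mt_x P z i)"

definition mt_T :: "nat \<Rightarrow> (nat \<Rightarrow> 'a \<Rightarrow> 'a::real_vector) \<Rightarrow> (nat \<Rightarrow> 'a) \<Rightarrow> nat \<Rightarrow> 'a" where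
  "mt_T n P z i = z i + (mt_M n P z (Suc i) - mt_M n P z i)"

definition prod_norm :: "nat set \<Rightarrow> (nat \<Rightarrow> 'a::real_normed_vector) \<Rightarrow> real" where
  "prod_norm I f = sqrt (\<Sum>i\<in>I. (norm (f i))\<^sup>2)"

end

theory Submission
  imports Defs
begin


typedef (overloaded) 'a fs = "{f :: nat \<Rightarrow> 'a::zero. finite {i. f i \<noteq> 0}}"
  morphisms app Abs_fs
  by (rule exI[of _ "\<lambda>_. 0"]) simp

setup_lifting type_definition_fs

lemma fs_eqI: "(\<And>i. app x i = app y i) \<Longrightarrow> x = y"
  by (metis app_inject ext)

lemma fin_supp: "finite {i. app x i \<noteq> 0}"
  using app by auto

instantiation fs :: (real_vector) real_vector
begin
lift_definition zero_fs :: "'a fs" is "\<lambda>_. 0" by simp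
lift_definition plus_fs :: "'a fs \<Rightarrow> 'a fs \<Rightarrow> 'a fs" is "\<lambda>f g i. f i + g i"
proof -
  fix f g :: "nat \<Rightarrow> 'a" assume "finite {i. f i \<noteq> 0}" "finite {i. g i \<noteq> 0}"
  then show "finite {i. f i + g i \<noteq> 0}"
    by (rule finite_subset[rotated, OF finite_UnI]) auto
qed
lift_definition minus_fs :: "'a fs \<Rightarrow> 'a fs \<Rightarrow> 'a fs" is "\<lambda>f g i. f i - g i"
proof -
  fix f g :: "nat \<Rightarrow> 'a" assume "finite {i. f i \<noteq> 0}" "finite {i. g i \<noteq> 0}"
  then show "finite {i. f i - g i \<noteq> 0}"
    by (rule finite_subset[rotated, OF finite_UnI]) auto
qed
lift_definition uminus_fs :: "'a fs \<Rightarrow> 'a fs" is "\<lambda>f i. - f i" by simp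
lift_definition scaleR_fs :: "real \<Rightarrow> 'a fs \<Rightarrow> 'a fs" is "\<lambda>r f i. r *\<^sub>R f i"
proof -
  fix r and f :: "nat \<Rightarrow> 'a" assume "finite {i. f i \<noteq> 0}"
  then show "finite {i. r *\<^sub>R f i \<noteq> 0}"
    by (rule finite_subset[rotated]) auto
qed
instance
  by standard (transfer; auto simp: algebra_simps)+
end

lemma app_zero[simp]: "app 0 i = 0" by transfer simp
lemma app_plus[simp]: "app (x + y) i = app x i + app y i" by transfer simp
lemma app_minus[simp]: "app (x - y) i = app x i - app y i" by transfer simp
lemma app_uminus[simp]: "app (- x) i = - app x i" by transfer simp
lemma app_scaleR[simp]: "app (r *\<^sub>R x) i = r *\<^sub>R app x i" by transfer simp

definition supp2 :: "'a::real_vector fs \<Rightarrow> 'a fs \<Rightarrow> nat set" where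
  "supp2 x y = {i. app x i \<noteq> 0} \<union> {i. app y i \<noteq> 0}"

lemma finite_supp2[simp]: "finite (supp2 x y)"
  unfolding supp2_def using fin_supp by blast

instantiation fs :: (real_inner) real_inner
begin
definition inner_fs :: "'a fs \<Rightarrow> 'a fs \<Rightarrow> real" where
  "inner_fs x y = (\<Sum>i\<in>{i. app x i \<noteq> 0}. inner (app x i) (app y i))"
definition norm_fs :: "'a fs \<Rightarrow> real" where "norm_fs x = sqrt (inner x x)"
definition sgn_fs :: "'a fs \<Rightarrow> 'a fs" where "sgn_fs x = x /\<^sub>R norm x"
definition dist_fs :: "'a fs \<Rightarrow> 'a fs \<Rightarrow> real" where "dist_fs x y = norm (x - y)"
definition uniformity_fs :: "('a fs \<times> 'a fs) filter" where
  "uniformity_fs = (INF e\<in>{0<..}. principal {(x, y). dist x y < e})"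
definition open_fs :: "'a fs set \<Rightarrow> bool" where
  "open_fs U = (\<forall>x\<in>U. \<forall>\<^sub>F (x', y) in uniformity. x' = x \<longrightarrow> y \<in> U)"

lemma inner_fs_sup: "finite A \<Longrightarrow> {i. app x i \<noteq> 0} \<subseteq> A \<Longrightarrow>
   inner x y = (\<Sum>i\<in>A. inner (app x i) (app y i))"
  unfolding inner_fs_def by (rule sum.mono_neutral_left) auto

instance
proof
  fix x y z :: "'a fs" and r :: real
  show "inner x y = inner y x"
    using inner_fs_sup[of "supp2 x y" x y] inner_fs_sup[of "supp2 x y" y x]
    using fin_supp[of x] fin_supp[of y] by (simp add: supp2_def inner_commute sup_commute)
  show "inner (x + y) z = inner x z + inner y z"
  proof -
    have f: "finite (supp2 x y)" by simp
    have "{i. app (x+y) i \<noteq> 0} \<subseteq> supp2 x y" "{i. app x i \<noteq> 0} \<subseteq> supp2 x y"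
      "{i. app y i \<noteq> 0} \<subseteq> supp2 x y" unfolding supp2_def by auto
    with inner_fs_sup[OF f] show ?thesis by (simp add: inner_add_left sum.distrib)
  qed
  show "inner (r *\<^sub>R x) y = r * inner x y"
    using inner_fs_sup[of "supp2 x y" "r *\<^sub>R x" y] inner_fs_sup[of "supp2 x y" x y]
    using fin_supp[of x] fin_supp[of y] by (auto simp: supp2_def sum_distrib_left)
  show "0 \<le> inner x x" unfolding inner_fs_def by (simp add: sum_nonneg)
  show "inner x x = 0 \<longleftrightarrow> x = 0"
  proof
    assume "inner x x = 0"
    then have "\<forall>i\<in>{i. app x i \<noteq> 0}. inner (app x i) (app x i) = 0"
      unfolding inner_fs_def using fin_supp[of x] by (subst (asm) sum_nonneg_eq_0_iff) auto
    then show "x = 0" by (intro fs_eqI) auto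
  qed (simp add: inner_fs_def)
  show "norm x = sqrt (inner x x)" by (simp add: norm_fs_def)
qed (simp_all add: sgn_fs_def dist_fs_def uniformity_fs_def open_fs_def)
end

lemma norm_fs_sup: "finite A \<Longrightarrow> {i. app x i \<noteq> 0} \<subseteq> A \<Longrightarrow>
   (norm x)\<^sup>2 = (\<Sum>i\<in>A. (norm (app x i))\<^sup>2)"
  by (simp add: power2_norm_eq_inner inner_fs_sup)


lift_definition cutfs :: "nat set \<Rightarrow> (nat \<Rightarrow> 'a::zero) \<Rightarrow> 'a fs"
  is "\<lambda>A f i. if i \<in> A \<and> finite A then f i else 0"
proof -
  fix A :: "nat set" and f :: "nat \<Rightarrow> 'a"
  show "finite {i. (if i \<in> A \<and> finite A then f i else 0) \<noteq> 0}"
  proof (cases "finite A")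
    case True then show ?thesis by (rule finite_subset[rotated]) auto
  qed simp
qed

lemma app_cutfs: "finite A \<Longrightarrow> app (cutfs A f) i = (if i \<in> A then f i else 0)"
  by transfer simp

lemma norm_app_le: "norm (app (v::'a::real_inner fs) i) \<le> norm v"
proof -
  have "(norm v)\<^sup>2 = (\<Sum>j\<in>insert i {j. app v j \<noteq> 0}. (norm (app v j))\<^sup>2)"
    by (rule norm_fs_sup) (use fin_supp in auto)
  also have "\<dots> \<ge> (norm (app v i))\<^sup>2"
    by (rule member_le_sum) (use fin_supp in auto)
  finally show ?thesis using power2_le_imp_le by simp
qed

lemma bl_app: "bounded_linear (\<lambda>v::'a::real_inner fs. app v i)"
  by (rule bounded_linear_intro[where K = 1]) (simp_all add: norm_app_le)

definition DD :: "nat set \<Rightarrow> 'a::real_inner fs set" where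
  "DD A = {v. \<forall>i. i \<notin> A \<longrightarrow> app v i = 0}"

lemma subspace_DD: "subspace (DD A)"
  unfolding subspace_def DD_def by simp

lemma norm_DD: "finite A \<Longrightarrow> v \<in> DD A \<Longrightarrow> (norm v)\<^sup>2 = (\<Sum>i\<in>A. (norm (app v i))\<^sup>2)"
  by (rule norm_fs_sup) (auto simp: DD_def)

lemma complete_DD:
  assumes A: "finite A"
  shows "complete (DD A :: 'a::{real_inner,complete_space} fs set)"
proof (rule completeI)
  fix f :: "nat \<Rightarrow> 'a fs" assume fD: "\<forall>k. f k \<in> DD A" and cf: "Cauchy f"
  have ci: "Cauchy (\<lambda>k. app (f k) i)" for i
  proof (rule metric_CauchyI)
    fix e :: real assume "e > 0"
    then obtain M where M: "\<forall>m\<ge>M. \<forall>n\<ge>M. dist (f m) (f n) < e" using metric_CauchyD[OF cf] by blast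
    have "dist (app (f m) i) (app (f n) i) \<le> dist (f m) (f n)" for m n
      using norm_app_le[of "f m - f n" i] by (simp add: dist_norm)
    then show "\<exists>M. \<forall>m\<ge>M. \<forall>n\<ge>M. dist (app (f m) i) (app (f n) i) < e"
      using M by (meson le_less_trans)
  qed
  define g where "g i = lim (\<lambda>k. app (f k) i)" for i
  have gl: "(\<lambda>k. app (f k) i) \<longlonglongrightarrow> g i" for i
    unfolding g_def using ci[of i] by (simp add: Cauchy_convergent_iff convergent_LIMSEQ_iff)
  define l where "l = cutfs A g"
  have lD: "l \<in> DD A" unfolding l_def DD_def using A by (simp add: app_cutfs)
  have dD: "f k - l \<in> DD A" for k using fD lD by (simp add: DD_def)
  have "(\<lambda>k. (norm (f k - l))\<^sup>2) \<longlonglongrightarrow> 0"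
  proof -
    have e: "(norm (f k - l))\<^sup>2 = (\<Sum>i\<in>A. (norm (app (f k) i - g i))\<^sup>2)" for k
      using norm_DD[OF A dD[of k]] A by (simp add: l_def app_cutfs)
    have "(\<lambda>k. \<Sum>i\<in>A. (norm (app (f k) i - g i))\<^sup>2) \<longlonglongrightarrow> 0"
    proof (rule tendsto_null_sum)
      fix i assume "i \<in> A"
      have "(\<lambda>k. app (f k) i - g i) \<longlonglongrightarrow> 0" using gl[of i] by (rule LIM_zero)
      then have "(\<lambda>k. norm (app (f k) i - g i)) \<longlonglongrightarrow> 0" by (rule tendsto_norm_zero)
      then show "(\<lambda>k. (norm (app (f k) i - g i))\<^sup>2) \<longlonglongrightarrow> 0" using tendsto_power[of _ 0 _ 2] by fastforce
    qed
    then show ?thesis using e by simp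
  qed
  then have "(\<lambda>k. sqrt ((norm (f k - l))\<^sup>2)) \<longlonglongrightarrow> sqrt 0" by (rule tendsto_real_sqrt)
  then have "(\<lambda>k. norm (f k - l)) \<longlonglongrightarrow> 0" by simp
  then have "f \<longlonglongrightarrow> l" by (simp add: tendsto_norm_zero_iff LIM_zero_iff)
  then show "\<exists>l\<in>DD A. f \<longlonglongrightarrow> l" using lD by blast
qed



lemma subspace_closure_gen:
  fixes S :: "'v::real_normed_vector set"
  assumes "subspace S" shows "subspace (closure S)"
  unfolding subspace_def
proof (intro conjI ballI allI)
  show "0 \<in> closure S" using assms closure_subset subspace_0 by blast
next
  fix x y assume "x \<in> closure S" "y \<in> closure S"
  then obtain f g where f: "\<forall>n. f n \<in> S" "f \<longlonglongrightarrow> x" and g: "\<forall>n. g n \<in> S" "g \<longlonglongrightarrow> y"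
    unfolding closure_sequential by blast
  have "\<forall>n. f n + g n \<in> S" using f g assms by (simp add: subspace_add)
  moreover have "(\<lambda>n. f n + g n) \<longlonglongrightarrow> x + y" using f g by (intro tendsto_add)
  ultimately show "x + y \<in> closure S" unfolding closure_sequential by (intro exI[where x="\<lambda>n. f n + g n"] conjI)
next
  fix c :: real and x assume "x \<in> closure S"
  then obtain f where f: "\<forall>n. f n \<in> S" "f \<longlonglongrightarrow> x"
    unfolding closure_sequential by blast
  have "\<forall>n. c *\<^sub>R f n \<in> S" using f assms by (simp add: subspace_scale)
  moreover have "(\<lambda>n. c *\<^sub>R f n) \<longlonglongrightarrow> c *\<^sub>R x" using f by (intro tendsto_scaleR tendsto_const)
  ultimately show "c *\<^sub>R x \<in> closure S" unfolding closure_sequential by (intro exI[where x="\<lambda>n. c *\<^sub>R f n"] conjI)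
qed

lemma var_zero:
  fixes a q :: real
  assumes q: "q \<ge> 0" and h: "\<And>t. 2 * t * a \<le> t\<^sup>2 * q"
  shows "a = 0"
proof -
  define t where "t = a / (q + 1)"
  have tq: "t * (q + 1) = a" using q by (simp add: t_def)
  have "2 * t * a * (q+1)\<^sup>2 \<le> t\<^sup>2 * q * (q+1)\<^sup>2" by (rule mult_right_mono[OF h]) simp
  also have "2 * t * a * (q+1)\<^sup>2 = 2 * a * (t * (q + 1)) * (q+1)" by (simp add: power2_eq_square)
  also have "t\<^sup>2 * q * (q+1)\<^sup>2 = (t * (q+1))\<^sup>2 * q" by (simp add: power2_eq_square)
  finally have "2 * a * a * (q+1) \<le> a * a * q" using tq by (simp add: power2_eq_square)
  then have "a * a * (q + 2) \<le> 0" by (simp add: algebra_simps)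
  moreover have "a * a * (q + 2) \<ge> 0" using q by simp
  ultimately have "a * a * (q+2) = 0" by linarith
  then show ?thesis using q by simp
qed

lemma proj_exists:
  fixes C :: "'v::real_inner set"
  assumes sub: "subspace C" and comp: "complete C"
  shows "\<exists>p\<in>C. \<forall>c\<in>C. inner (x - p) c = 0"
proof -
  define f where "f c = (norm (x - c))\<^sup>2" for c
  define d where "d = Inf (f ` C)"
  have ne: "f ` C \<noteq> {}" using subspace_0[OF sub] by blast
  have bdd: "bdd_below (f ` C)" unfolding f_def by (rule bdd_belowI[of _ 0]) auto
  have dle: "d \<le> f c" if "c \<in> C" for c unfolding d_def using bdd that by (simp add: cInf_lower)
  have "\<forall>k. \<exists>c\<in>C. f c < d + 1 / real (Suc k)"
  proof
    fix k
    have "Inf (f ` C) < d + 1 / real (Suc k)" unfolding d_def by simp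
    then show "\<exists>c\<in>C. f c < d + 1 / real (Suc k)" using cInf_less_iff[OF ne bdd] by auto
  qed
  then obtain s where sC: "\<forall>k. s k \<in> C" and sf: "\<forall>k. f (s k) < d + 1 / real (Suc k)"
    by metis
  have par: "(norm (a - b))\<^sup>2 \<le> 2 * f a + 2 * f b - 4 * d" if "a \<in> C" "b \<in> C" for a b
  proof -
    have m: "(1/2) *\<^sub>R (a + b) \<in> C" using that sub by (simp add: subspace_add subspace_scale)
    have "(norm (a - b))\<^sup>2 = 2 * f a + 2 * f b - 4 * f ((1/2) *\<^sub>R (a + b))"
      unfolding f_def power2_norm_eq_inner by (simp add: inner_simps algebra_simps)
    then show ?thesis using dle[OF m] by linarith
  qed
  have cau: "Cauchy s"
  proof (rule metric_CauchyI)
    fix e :: real assume e: "e > 0"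
    obtain M :: nat where M: "4 / e\<^sup>2 < real M" using reals_Archimedean2 by blast
    have "dist (s m) (s n) < e" if "m \<ge> M" "n \<ge> M" for m n
    proof -
      have "(dist (s m) (s n))\<^sup>2 \<le> 2 * f (s m) + 2 * f (s n) - 4 * d"
        using par sC by (simp add: dist_norm)
      also have "\<dots> < 2 / real (Suc m) + 2 / real (Suc n)" using sf[rule_format, of m] sf[rule_format, of n] by simp
      also have "\<dots> \<le> 2 / real (Suc M) + 2 / real (Suc M)"
        using that by (intro add_mono divide_left_mono) auto
      also have "\<dots> < e\<^sup>2"
      proof -
        have "4 / e\<^sup>2 < real (Suc M)" using M by simp
        then have "4 < e\<^sup>2 * real (Suc M)" using e by (simp add: field_simps)
        then have "4 / real (Suc M) < e\<^sup>2" by (simp add: pos_divide_less_eq mult.commute)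
        then show ?thesis by simp
      qed
      finally show ?thesis using e by (meson abs_le_square_iff abs_of_pos linorder_not_less order.strict_iff_not zero_le_dist power_less_imp_less_base)
    qed
    then show "\<exists>M. \<forall>m\<ge>M. \<forall>n\<ge>M. dist (s m) (s n) < e" by blast
  qed
  then obtain p where pC: "p \<in> C" and lim: "s \<longlonglongrightarrow> p" using comp sC completeE by metis
  have "(\<lambda>k. f (s k)) \<longlonglongrightarrow> f p" unfolding f_def by (intro tendsto_intros lim)
  moreover have "(\<lambda>k. d + 1 / real (Suc k)) \<longlonglongrightarrow> d + 0"
    by (intro tendsto_add tendsto_const) (rule LIMSEQ_inverse_real_of_nat[unfolded inverse_eq_divide])
  ultimately have "f p \<le> d + 0" using sf by (intro LIMSEQ_le[where X = "\<lambda>k. f (s k)"]) (auto intro: less_imp_le)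
  then have fp: "f p = d" using dle[OF pC] by simp
  show ?thesis
  proof (intro bexI[OF _ pC] ballI)
    fix c assume c: "c \<in> C"
    show "inner (x - p) c = 0"
    proof (rule var_zero[where q = "inner c c"])
      fix t :: real
      have "p + t *\<^sub>R c \<in> C" using c pC sub by (simp add: subspace_add subspace_scale)
      then have "f p \<le> f (p + t *\<^sub>R c)" using dle fp by simp
      then show "2 * t * inner (x - p) c \<le> t\<^sup>2 * inner c c"
        unfolding f_def power2_norm_eq_inner by (simp add: inner_simps algebra_simps power2_eq_square inner_commute)
    qed simp
  qed
qed

lemma nds: fixes a b :: "'v::real_inner"
  shows "(norm (a - b))\<^sup>2 = inner a a - 2 * inner a b + inner b b"
    unfolding power2_norm_eq_inner by (simp add: inner_diff_left inner_diff_right inner_commute[of b a])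

lemma avg_id: fixes a b :: "'v::real_inner"
  shows "(norm ((1-lam) *\<^sub>R a + lam *\<^sub>R b))\<^sup>2 = (1-lam) * (norm a)\<^sup>2 + lam * (norm b)\<^sup>2 - lam * (1-lam) * (norm (a - b))\<^sup>2"
proof -
  have 1: "(norm ((1-lam) *\<^sub>R a + lam *\<^sub>R b))\<^sup>2 = (1-lam)*(1-lam) * inner a a + 2*lam*(1-lam) * inner a b + lam*lam*inner b b"
    unfolding power2_norm_eq_inner by (simp add: inner_add_left inner_add_right inner_commute[of b a] algebra_simps)
  have 2: "(norm (a - b))\<^sup>2 = inner a a - 2 * inner a b + inner b b"
    unfolding power2_norm_eq_inner by (simp add: inner_diff_left inner_diff_right inner_commute[of b a])
  show ?thesis unfolding 1 2 unfolding power2_norm_eq_inner by (simp add: algebra_simps)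
qed

lemma avg_conv:
  fixes T :: "'v::real_inner \<Rightarrow> 'v" and D :: "'v set" and lam :: real
  assumes lin: "linear T" and subD: "subspace D" and compD: "complete D" and TD: "\<And>v. v \<in> D \<Longrightarrow> T v \<in> D"
    and ne: "\<And>v. v \<in> D \<Longrightarrow> norm (T v) \<le> norm v" and lam: "0 < lam" "lam < 1"
    and w0: "w 0 \<in> D" and ws: "\<And>k. w (Suc k) = (1-lam) *\<^sub>R w k + lam *\<^sub>R T (w k)"
  shows "\<exists>wb\<in>D. T wb = wb \<and> w \<longlonglongrightarrow> wb"
proof -
  define S where "S v = (1-lam) *\<^sub>R v + lam *\<^sub>R T v" for v
  have linS: "linear S" unfolding S_def
    by (rule linearI) (simp_all add: linear_add[OF lin] linear_scale[OF lin] algebra_simps)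
  have SD: "S v \<in> D" if "v \<in> D" for v
    unfolding S_def using that TD subD by (simp add: subspace_add subspace_scale)
  have Sid: "(norm (S v))\<^sup>2 = (1-lam) * (norm v)\<^sup>2 + lam * (norm (T v))\<^sup>2 - lam * (1-lam) * (norm (v - T v))\<^sup>2" for v
    unfolding S_def by (rule avg_id)
  have Sle: "(norm (S v))\<^sup>2 \<le> (norm v)\<^sup>2 - lam * (1-lam) * (norm (v - T v))\<^sup>2" if "v \<in> D" for v
  proof -
    have "(norm (T v))\<^sup>2 \<le> (norm v)\<^sup>2" using ne[OF that] by (simp add: power_mono)
    then have "lam * (norm (T v))\<^sup>2 \<le> lam * (norm v)\<^sup>2" using lam by simp
    then show ?thesis unfolding Sid by (simp add: algebra_simps)
  qed
  have Sne: "norm (S v) \<le> norm v" if "v \<in> D" for v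
  proof -
    have "(norm (S v))\<^sup>2 \<le> (norm v)\<^sup>2" 
    proof -
      have "lam * (1-lam) * (norm (v - T v))\<^sup>2 \<ge> 0" using lam by simp
      then show ?thesis using Sle[OF that] by linarith
    qed
    then show ?thesis using power2_le_imp_le by simp
  qed
  have linSk: "linear (S ^^ k)" for k
    proof (induction k)
    case 0 show ?case by (simp add: linearI)
  next
    case (Suc k) then show ?case using linear_compose[OF Suc linS] by (simp add: comp_def)
  qed
  have SkD: "(S ^^ k) v \<in> D" if "v \<in> D" for k v
    using that by (induction k) (auto intro: SD)
  have Skne: "norm ((S ^^ k) v) \<le> norm v" if "v \<in> D" for k v
    using that by (induction k) (auto intro: order_trans[OF Sne] SkD)
  have wk: "w k = (S ^^ k) (w 0)" for k
    by (induction k) (simp_all add: ws S_def)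
  have asr: "(\<lambda>k. (S ^^ k) y - T ((S ^^ k) y)) \<longlonglongrightarrow> 0" if y: "y \<in> D" for y
  proof -
    define g where "g k = (norm ((S ^^ k) y - T ((S ^^ k) y)))\<^sup>2" for k
    define c where "c = lam * (1 - lam)"
    have c: "c > 0" using lam by (simp add: c_def)
    have step: "(norm ((S ^^ Suc k) y))\<^sup>2 \<le> (norm ((S ^^ k) y))\<^sup>2 - c * g k" for k
      using Sle[OF SkD[OF y, of k]] by (simp add: c_def g_def)
    have part: "(\<Sum>k<N. c * g k) \<le> (norm y)\<^sup>2 - (norm ((S ^^ N) y))\<^sup>2" for N
    proof (induction N)
      case (Suc N) then show ?case using step[of N] by simp
    qed simp
    have "summable (\<lambda>k. c * g k)"
    proof (rule summableI_nonneg_bounded[where x = "(norm y)\<^sup>2"])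
      show "0 \<le> c * g k" for k using c by (simp add: g_def)
      show "(\<Sum>k<N. c * g k) \<le> (norm y)\<^sup>2" for N using part[of N] zero_le_power2[of "norm ((S ^^ N) y)"] by linarith
    qed
    then have "summable g" using c summable_mult[of "\<lambda>k. c * g k" "1/c"] by simp
    then have "g \<longlonglongrightarrow> 0" by (rule summable_LIMSEQ_zero)
    then have "(\<lambda>k. sqrt (g k)) \<longlonglongrightarrow> sqrt 0" by (intro tendsto_real_sqrt)
    then have "(\<lambda>k. norm ((S ^^ k) y - T ((S ^^ k) y))) \<longlonglongrightarrow> 0" by (simp add: g_def)
    then show ?thesis by (simp add: tendsto_norm_zero_iff)
  qed
  define R where "R = (\<lambda>y. y - T y) ` D"
  have RD: "R \<subseteq> D" unfolding R_def using TD subD by (auto intro: subspace_diff)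
  have Rlim: "(\<lambda>k. (S ^^ k) r) \<longlonglongrightarrow> 0" if "r \<in> R" for r
  proof -
    obtain y where y: "y \<in> D" "r = y - T y" using \<open>r \<in> R\<close> unfolding R_def by blast
    have r1: "r = (1/lam) *\<^sub>R (y - S y)" using lam by (simp add: y S_def algebra_simps)
    have eq: "(S ^^ k) r = (S ^^ k) y - T ((S ^^ k) y)" for k
    proof -
      have "(S ^^ k) r = (S ^^ k) ((1/lam) *\<^sub>R (y - S y))" using r1 by (rule arg_cong)
      also have "\<dots> = (1/lam) *\<^sub>R ((S ^^ k) y - (S ^^ k) (S y))"
        by (simp only: linear_scale[OF linSk] linear_diff[OF linSk])
      also have "(S ^^ k) (S y) = S ((S ^^ k) y)" by (rule funpow_swap1[symmetric])
      also have "(S ^^ k) y - S ((S ^^ k) y) = lam *\<^sub>R ((S ^^ k) y - T ((S ^^ k) y))"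
        by (simp add: S_def algebra_simps)
      finally show ?thesis using lam by simp
    qed
    then have "(\<lambda>k. (S ^^ k) r) = (\<lambda>k. (S ^^ k) y - T ((S ^^ k) y))" by auto
    then show ?thesis using asr[OF y(1)] by simp
  qed
  define C where "C = closure R"
  have closD: "closed D" using compD complete_imp_closed by blast
  have CD: "C \<subseteq> D" unfolding C_def using RD closD closure_minimal by blast
  have Clim: "(\<lambda>k. (S ^^ k) r) \<longlonglongrightarrow> 0" if "r \<in> C" for r
  proof (rule LIMSEQ_I)
    fix e :: real assume e: "e > 0"
    obtain r' where r': "r' \<in> R" "dist r' r < e/2" using \<open>r \<in> C\<close> e unfolding C_def closure_approachable
      by (meson half_gt_zero)
    obtain N where N: "\<forall>k\<ge>N. norm ((S ^^ k) r' - 0) < e/2" using LIMSEQ_D[OF Rlim[OF r'(1)]] e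
      by (meson half_gt_zero)
    have "norm ((S ^^ k) r - 0) < e" if "k \<ge> N" for k
    proof -
      have rr: "r - r' \<in> D" using \<open>r \<in> C\<close> r'(1) CD RD subD by (auto intro: subspace_diff)
      have "(S ^^ k) r = (S ^^ k) (r - r') + (S ^^ k) r'" by (simp only: linear_diff[OF linSk] diff_add_cancel)
      then have "norm ((S ^^ k) r) \<le> norm ((S ^^ k) (r - r')) + norm ((S ^^ k) r')"
        by (simp only: norm_triangle_ineq)
      also have "\<dots> \<le> norm (r - r') + norm ((S ^^ k) r')" using Skne[OF rr] by simp
      also have "\<dots> < e/2 + e/2" using r'(2) N that by (intro add_le_less_mono) (auto simp: dist_norm norm_minus_commute)
      finally show ?thesis by simp
    qed
    then show "\<exists>N. \<forall>k\<ge>N. norm ((S ^^ k) r - 0) < e" by blast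
  qed
  have linR: "linear (\<lambda>y. y - T y)"
    by (rule linearI) (simp_all add: linear_add[OF lin] linear_scale[OF lin] algebra_simps)
  have subR: "subspace R" unfolding R_def using linR subD by (rule linear_subspace_image)
  have subC: "subspace C" unfolding C_def by (rule subspace_closure_gen[OF subR])
  have compC: "complete C" using CD compD unfolding C_def by (intro complete_closed_subset[OF closed_closure]) auto
  obtain p where pC: "p \<in> C" and orth: "\<forall>c\<in>C. inner (w 0 - p) c = 0"
    using proj_exists[OF subC compC, of "w 0"] by (elim bexE) simp
  define wb where "wb = w 0 - p"
  have wbD: "wb \<in> D" unfolding wb_def using subspace_diff[OF subD w0 CD[THEN subsetD, OF pC]] .
  have "wb - T wb \<in> R" unfolding R_def using wbD by (rule image_eqI[rotated]) simp
  then have "wb - T wb \<in> C" unfolding C_def using closure_subset by (rule subsetD[rotated])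
  then have "inner (w 0 - p) (wb - T wb) = 0" using orth by blast
  then have i0: "inner wb (wb - T wb) = 0" by (simp only: wb_def[symmetric])
  have "(norm (T wb - wb))\<^sup>2 = (norm (T wb))\<^sup>2 - (norm wb)\<^sup>2 + 2 * inner wb (wb - T wb)"
    using nds[of "T wb" wb] by (simp add: power2_norm_eq_inner inner_diff_right inner_commute[of wb "T wb"])
  also have "\<dots> \<le> 0" using i0 ne[OF wbD] by (simp add: power_mono)
  finally have Tfix: "T wb = wb" by simp
  have Sfix: "(S ^^ k) wb = wb" for k
    by (induction k) (simp_all add: S_def Tfix algebra_simps)
  have wsplit: "w k = wb + (S ^^ k) p" for k
  proof -
    have "w 0 = wb + p" by (simp add: wb_def)
    then have "w k = (S ^^ k) (wb + p)" using wk[of k] by simp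
    also have "\<dots> = wb + (S ^^ k) p" by (simp only: linear_add[OF linSk] Sfix)
    finally show ?thesis .
  qed
  have "(\<lambda>k. wb + (S ^^ k) p) \<longlonglongrightarrow> wb + 0" by (intro tendsto_add tendsto_const Clim pC)
  moreover have "w = (\<lambda>k. wb + (S ^^ k) p)" using wsplit by (intro ext)
  ultimately have "w \<longlonglongrightarrow> wb" by simp
  then show ?thesis using wbD Tfix by blast
qed



lemma op_unique:
  fixes U :: "'a::real_inner set"
  assumes sub: "subspace U" and y: "y \<in> U" "\<forall>u\<in>U. inner (x - y) u = 0"
    and y': "y' \<in> U" "\<forall>u\<in>U. inner (x - y') u = 0"
  shows "y = y'"
proof -
  have d: "y - y' \<in> U" using sub y y' by (simp add: subspace_diff)
  have "inner (x - y') (y - y') - inner (x - y) (y - y') = 0" using y y' d by simp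
  then have "inner (y - y') (y - y') = 0" by (simp add: inner_diff_left)
  then show ?thesis by simp
qed

lemma op_prop:
  fixes U :: "'a::{real_inner,complete_space} set"
  assumes sub: "subspace U" and cl: "closed U"
  shows "orth_proj U x \<in> U \<and> (\<forall>u\<in>U. inner (x - orth_proj U x) u = 0)"
proof -
  have "complete U" using cl complete_eq_closed by blast
  then obtain p where p: "p \<in> U" "\<forall>u\<in>U. inner (x - p) u = 0" using proj_exists[OF sub] by blast
  have "\<exists>!y. y \<in> U \<and> (\<forall>u\<in>U. inner (x - y) u = 0)"
    using p op_unique[OF sub] by blast
  then show ?thesis unfolding orth_proj_def by (rule theI')
qed

lemma op_char:
  fixes U :: "'a::{real_inner,complete_space} set"
  assumes sub: "subspace U" and cl: "closed U" and y: "y \<in> U" "\<forall>u\<in>U. inner (x - y) u = 0"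
  shows "orth_proj U x = y"
  using op_unique[OF sub _ _ y] op_prop[OF sub cl, of x] by blast

lemma op_id:
  fixes U :: "'a::{real_inner,complete_space} set"
  assumes sub: "subspace U" and cl: "closed U" and u: "u \<in> U"
  shows "orth_proj U u = u"
  by (rule op_char[OF sub cl u]) simp

lemma op_linear:
  fixes U :: "'a::{real_inner,complete_space} set"
  assumes sub: "subspace U" and cl: "closed U"
  shows "linear (orth_proj U)"
proof (rule linearI)
  fix x y :: 'a and c :: real
  note px = op_prop[OF sub cl, of x] and py = op_prop[OF sub cl, of y]
  show "orth_proj U (x + y) = orth_proj U x + orth_proj U y"
  proof (rule op_char[OF sub cl])
    show "orth_proj U x + orth_proj U y \<in> U" using px py sub by (simp add: subspace_add)
    show "\<forall>u\<in>U. inner (x + y - (orth_proj U x + orth_proj U y)) u = 0"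
    proof
      fix u assume "u \<in> U"
      then have "inner (x - orth_proj U x) u + inner (y - orth_proj U y) u = 0" using px py by simp
      then show "inner (x + y - (orth_proj U x + orth_proj U y)) u = 0"
        by (simp add: inner_diff_left inner_add_left algebra_simps)
    qed
  qed
  show "orth_proj U (c *\<^sub>R x) = c *\<^sub>R orth_proj U x"
  proof (rule op_char[OF sub cl])
    show "c *\<^sub>R orth_proj U x \<in> U" using px sub by (simp add: subspace_scale)
    show "\<forall>u\<in>U. inner (c *\<^sub>R x - c *\<^sub>R orth_proj U x) u = 0"
    proof
      fix u assume "u \<in> U"
      then have "c * inner (x - orth_proj U x) u = 0" using px by simp
      then show "inner (c *\<^sub>R x - c *\<^sub>R orth_proj U x) u = 0"
        by (simp add: inner_diff_left algebra_simps)
    qed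
  qed
qed

lemma op_norm:
  fixes U :: "'a::{real_inner,complete_space} set"
  assumes sub: "subspace U" and cl: "closed U"
  shows "norm (orth_proj U x) \<le> norm x"
proof -
  note px = op_prop[OF sub cl, of x]
  have o: "inner (x - orth_proj U x) (orth_proj U x) = 0" using px by simp
  have "(norm ((x - orth_proj U x) + orth_proj U x))\<^sup>2 = (norm (x - orth_proj U x))\<^sup>2 + (norm (orth_proj U x))\<^sup>2"
    by (rule norm_add_Pythagorean) (simp add: orthogonal_def o)
  then have "(norm x)\<^sup>2 = (norm (x - orth_proj U x))\<^sup>2 + (norm (orth_proj U x))\<^sup>2" by simp
  then have "(norm (orth_proj U x))\<^sup>2 \<le> (norm x)\<^sup>2" by simp
  then show ?thesis using power2_le_imp_le by simp
qed

lemma op_bounded_linear: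
  fixes U :: "'a::{real_inner,complete_space} set"
  assumes sub: "subspace U" and cl: "closed U"
  shows "bounded_linear (orth_proj U)"
proof -
  have l: "linear (orth_proj U)" by (rule op_linear[OF sub cl])
  show ?thesis
    by (rule bounded_linear_intro[where K = 1]) (simp_all add: linear_add[OF l] linear_scale[OF l] op_norm[OF sub cl])
qed

lemma op_sub:
  fixes U Z :: "'a::{real_inner,complete_space} set"
  assumes sub: "subspace U" and cl: "closed U" and subZ: "subspace Z" and clZ: "closed Z" and ZU: "Z \<subseteq> U"
  shows "orth_proj Z (orth_proj U x) = orth_proj Z x"
proof -
  note pZ = op_prop[OF subZ clZ, of x] and pU = op_prop[OF sub cl, of x]
  show ?thesis
  proof (rule op_char[OF subZ clZ])
    show "orth_proj Z x \<in> Z" using pZ by simp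
    show "\<forall>u\<in>Z. inner (orth_proj U x - orth_proj Z x) u = 0"
    proof
      fix u assume u: "u \<in> Z"
      then have "inner (x - orth_proj U x) u = 0" "inner (x - orth_proj Z x) u = 0" using pZ pU ZU by auto
      then show "inner (orth_proj U x - orth_proj Z x) u = 0" by (simp add: inner_diff_left)
    qed
  qed
qed



lemma mt_x_cong: "(\<And>i. 1 \<le> i \<Longrightarrow> i \<le> j \<Longrightarrow> z i = z' i) \<Longrightarrow> mt_x P z j = mt_x P z' j"
  by (induction P z j rule: mt_x.induct) auto

lemma mt_x_lin:
  "(\<And>i. 1 \<le> i \<Longrightarrow> i \<le> j \<Longrightarrow> linear (P i)) \<Longrightarrow>
   mt_x P (\<lambda>i. a *\<^sub>R z i + b *\<^sub>R z' i) j = a *\<^sub>R mt_x P z j + b *\<^sub>R mt_x P z' j"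
proof (induction P z j rule: mt_x.induct)
  case (1 P z) then show ?case by simp
next
  case (2 P z)
  then have l: "linear (P (Suc 0))" by simp
  show ?case by (simp add: linear_add[OF l] linear_scale[OF l])
next
  case (3 P z j)
  have l: "linear (P (Suc (Suc j)))" using 3 by simp
  have ih: "mt_x P (\<lambda>i. a *\<^sub>R z i + b *\<^sub>R z' i) (Suc j) = a *\<^sub>R mt_x P z (Suc j) + b *\<^sub>R mt_x P z' (Suc j)"
    using 3 by simp
  have e: "a *\<^sub>R mt_x P z (Suc j) + b *\<^sub>R mt_x P z' (Suc j) + (a *\<^sub>R z (Suc (Suc j)) + b *\<^sub>R z' (Suc (Suc j))) -
      (a *\<^sub>R z (Suc j) + b *\<^sub>R z' (Suc j)) =
      a *\<^sub>R (mt_x P z (Suc j) + z (Suc (Suc j)) - z (Suc j)) + b *\<^sub>R (mt_x P z' (Suc j) + z' (Suc (Suc j)) - z' (Suc j))"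
    by (simp add: algebra_simps)
  show ?case by (simp only: mt_x.simps ih e linear_add[OF l] linear_scale[OF l])
qed

lemma id4:
  fixes a b u v :: "'a::real_inner"
  assumes "inner (u + b - a - v) v = 0"
  shows "(norm (a + v - u))\<^sup>2 - (norm a)\<^sup>2 = 2 * inner b v - (norm v)\<^sup>2 - 2 * inner a u + (norm u)\<^sup>2"
  using assms
  by (simp add: power2_norm_eq_inner inner_add_left inner_add_right inner_diff_left inner_diff_right
      inner_commute[of v a] inner_commute[of u a] inner_commute[of v u] inner_commute[of v b])

lemma id5:
  fixes a p u v :: "'a::real_inner"
  assumes "inner (p + u - a - v) v = 0"
  shows "(norm (a + v - u))\<^sup>2 = (norm a)\<^sup>2 - 2 * inner a u + (norm p)\<^sup>2 + (norm u)\<^sup>2 - (norm (p - v))\<^sup>2"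
  using assms
  by (simp add: power2_norm_eq_inner inner_add_left inner_add_right inner_diff_left inner_diff_right
      inner_commute[of v a] inner_commute[of u a] inner_commute[of v u] inner_commute[of v p])

lemma claim:
  assumes orth: "\<And>i b. 1 \<le> i \<Longrightarrow> i \<le> Suc k \<Longrightarrow> inner (b - P i b) (P i b) = 0"
  shows "(\<Sum>i\<in>{1..k}. (norm (z i + mt_x P z (Suc i) - mt_x P z i))\<^sup>2) =
         (\<Sum>i\<in>{1..k}. (norm (z i))\<^sup>2) + 2 * inner (z (Suc k)) (mt_x P z (Suc k))
          - (norm (mt_x P z 1))\<^sup>2 - (norm (mt_x P z (Suc k)))\<^sup>2"
  using orth
proof (induction k)
  case 0
  have "inner (z 1 - P 1 (z 1)) (P 1 (z 1)) = 0" using 0 by simp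
  then show ?case by (simp add: power2_norm_eq_inner inner_diff_left)
next
  case (Suc k)
  have ih: "(\<Sum>i\<in>{1..k}. (norm (z i + mt_x P z (Suc i) - mt_x P z i))\<^sup>2) =
         (\<Sum>i\<in>{1..k}. (norm (z i))\<^sup>2) + 2 * inner (z (Suc k)) (mt_x P z (Suc k))
          - (norm (mt_x P z 1))\<^sup>2 - (norm (mt_x P z (Suc k)))\<^sup>2"
    using Suc by simp
  define b where "b = mt_x P z (Suc k) + z (Suc (Suc k)) - z (Suc k)"
  have xs: "mt_x P z (Suc (Suc k)) = P (Suc (Suc k)) b" by (simp add: b_def)
  have r: "inner (b - P (Suc (Suc k)) b) (P (Suc (Suc k)) b) = 0" using Suc.prems by simp
  have r': "inner (mt_x P z (Suc k) + z (Suc (Suc k)) - z (Suc k) - mt_x P z (Suc (Suc k))) (mt_x P z (Suc (Suc k))) = 0"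
    using r by (simp add: xs b_def)
  have step: "(norm (z (Suc k) + mt_x P z (Suc (Suc k)) - mt_x P z (Suc k)))\<^sup>2 - (norm (z (Suc k)))\<^sup>2
     = 2 * inner (z (Suc (Suc k))) (mt_x P z (Suc (Suc k))) - (norm (mt_x P z (Suc (Suc k))))\<^sup>2
       - 2 * inner (z (Suc k)) (mt_x P z (Suc k)) + (norm (mt_x P z (Suc k)))\<^sup>2"
    by (rule id4[OF r'])
  show ?case using ih step by simp
qed

lemma mt_M_cong:
  assumes n: "n \<ge> 2" and h: "\<And>i. 1 \<le> i \<Longrightarrow> i \<le> n - 1 \<Longrightarrow> z i = z' i" and i: "i \<le> n"
  shows "mt_M n P z i = mt_M n P z' i"
proof (cases "i = n")
  case True
  have "mt_x P z 1 = mt_x P z' 1" "mt_x P z (n-1) = mt_x P z' (n-1)"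
    by (rule mt_x_cong, use h n in auto)+
  moreover have "z (n - 1) = z' (n - 1)" using h n by simp
  ultimately show ?thesis using True unfolding mt_M_def by simp
next
  case False
  then show ?thesis unfolding mt_M_def using h i by (auto intro!: mt_x_cong)
qed

lemma mt_T_cong:
  assumes n: "n \<ge> 2" and "\<And>i. 1 \<le> i \<Longrightarrow> i \<le> n - 1 \<Longrightarrow> z i = z' i" "1 \<le> i" "i \<le> n - 1"
  shows "mt_T n P z i = mt_T n P z' i"
  unfolding mt_T_def using assms mt_M_cong[OF n, of z z'] by simp

lemma mt_M_lin:
  assumes n: "n \<ge> 2" and l: "\<And>i. 1 \<le> i \<Longrightarrow> i \<le> n \<Longrightarrow> linear (P i)" and i: "i \<le> n"
  shows "mt_M n P (\<lambda>i. a *\<^sub>R z i + b *\<^sub>R z' i) i = a *\<^sub>R mt_M n P z i + b *\<^sub>R mt_M n P z' i"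
proof (cases "i = n")
  case True
  have x1: "mt_x P (\<lambda>i. a *\<^sub>R z i + b *\<^sub>R z' i) 1 = a *\<^sub>R mt_x P z 1 + b *\<^sub>R mt_x P z' 1"
    by (rule mt_x_lin) (use l n in auto)
  have xm: "mt_x P (\<lambda>i. a *\<^sub>R z i + b *\<^sub>R z' i) (n-1) = a *\<^sub>R mt_x P z (n-1) + b *\<^sub>R mt_x P z' (n-1)"
    by (rule mt_x_lin) (use l n in auto)
  have ln: "linear (P n)" using l n by simp
  have e: "a *\<^sub>R mt_x P z 1 + b *\<^sub>R mt_x P z' 1 + (a *\<^sub>R mt_x P z (n-1) + b *\<^sub>R mt_x P z' (n-1)) - (a *\<^sub>R z (n-1) + b *\<^sub>R z' (n-1))
     = a *\<^sub>R (mt_x P z 1 + mt_x P z (n-1) - z (n-1)) + b *\<^sub>R (mt_x P z' 1 + mt_x P z' (n-1) - z' (n-1))"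
    by (simp add: algebra_simps)
  show ?thesis using True unfolding mt_M_def
    by (simp only: simp_thms if_True x1 xm e linear_add[OF ln] linear_scale[OF ln])
next
  case False
  then show ?thesis unfolding mt_M_def using i l by (simp add: mt_x_lin)
qed

lemma mt_T_lin:
  assumes n: "n \<ge> 2" and l: "\<And>i. 1 \<le> i \<Longrightarrow> i \<le> n \<Longrightarrow> linear (P i)" and i: "i \<le> n - 1"
  shows "mt_T n P (\<lambda>i. a *\<^sub>R z i + b *\<^sub>R z' i) i = a *\<^sub>R mt_T n P z i + b *\<^sub>R mt_T n P z' i"
  unfolding mt_T_def using i n by (simp add: mt_M_lin[OF n l] algebra_simps)

lemma T_norm:
  assumes n: "n = Suc (Suc k)" "k \<ge> 1"
    and orth: "\<And>i b. 1 \<le> i \<Longrightarrow> i \<le> n \<Longrightarrow> inner (b - P i b) (P i b) = 0"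
  shows "(\<Sum>i\<in>{1..n-1}. (norm (mt_T n P z i))\<^sup>2) = (\<Sum>i\<in>{1..n-1}. (norm (z i))\<^sup>2) - (norm (mt_M n P z 1 - mt_M n P z n))\<^sup>2"
proof -
  have c: "(\<Sum>i\<in>{1..k}. (norm (z i + mt_x P z (Suc i) - mt_x P z i))\<^sup>2) =
         (\<Sum>i\<in>{1..k}. (norm (z i))\<^sup>2) + 2 * inner (z (Suc k)) (mt_x P z (Suc k))
          - (norm (mt_x P z 1))\<^sup>2 - (norm (mt_x P z (Suc k)))\<^sup>2"
    by (rule claim) (use orth n in auto)
  have T1: "mt_T n P z i = z i + mt_x P z (Suc i) - mt_x P z i" if "i \<in> {1..k}" for i
    using that n unfolding mt_T_def mt_M_def by auto
  define v where "v = P n (mt_x P z 1 + mt_x P z (Suc k) - z (Suc k))"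
  have T2: "mt_T n P z (Suc k) = z (Suc k) + v - mt_x P z (Suc k)"
    using n unfolding mt_T_def mt_M_def v_def by simp
  have r: "inner ((mt_x P z 1 + mt_x P z (Suc k) - z (Suc k)) - v) v = 0" unfolding v_def
    by (rule orth) (use n in auto)
  have r': "inner (mt_x P z 1 + mt_x P z (Suc k) - z (Suc k) - v) v = 0" using r by simp
  have i5: "(norm (z (Suc k) + v - mt_x P z (Suc k)))\<^sup>2 = (norm (z (Suc k)))\<^sup>2 - 2 * inner (z (Suc k)) (mt_x P z (Suc k))
      + (norm (mt_x P z 1))\<^sup>2 + (norm (mt_x P z (Suc k)))\<^sup>2 - (norm (mt_x P z 1 - v))\<^sup>2"
    by (rule id5[OF r'])
  have M1: "mt_M n P z 1 = mt_x P z 1" using n by (simp add: mt_M_def)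
  have Mn: "mt_M n P z n = v" using n by (simp add: mt_M_def v_def)
  have "(\<Sum>i\<in>{1..n-1}. (norm (mt_T n P z i))\<^sup>2) = (\<Sum>i\<in>{1..k}. (norm (mt_T n P z i))\<^sup>2) + (norm (mt_T n P z (Suc k)))\<^sup>2"
    using n by simp
  also have "(\<Sum>i\<in>{1..k}. (norm (mt_T n P z i))\<^sup>2) = (\<Sum>i\<in>{1..k}. (norm (z i + mt_x P z (Suc i) - mt_x P z i))\<^sup>2)"
    using T1 by (intro sum.cong) auto
  also have "(\<Sum>i\<in>{1..n-1}. (norm (z i))\<^sup>2) = (\<Sum>i\<in>{1..k}. (norm (z i))\<^sup>2) + (norm (z (Suc k)))\<^sup>2"
    using n by simp
  ultimately show ?thesis using c i5 T2 M1 Mn by simp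
qed



lemma prod_norm_tendsto:
  assumes A: "finite A" and c: "\<And>i. i \<in> A \<Longrightarrow> (\<lambda>k. f k i) \<longlonglongrightarrow> g i"
  shows "(\<lambda>k. prod_norm A (\<lambda>i. f k i - g i)) \<longlonglongrightarrow> 0"
proof -
  have "(\<lambda>k. \<Sum>i\<in>A. (norm (f k i - g i))\<^sup>2) \<longlonglongrightarrow> 0"
  proof (rule tendsto_null_sum)
    fix i assume "i \<in> A"
    have "(\<lambda>k. f k i - g i) \<longlonglongrightarrow> 0" using c[OF \<open>i \<in> A\<close>] by (rule LIM_zero)
    then have "(\<lambda>k. norm (f k i - g i)) \<longlonglongrightarrow> 0" by (rule tendsto_norm_zero)
    then show "(\<lambda>k. (norm (f k i - g i))\<^sup>2) \<longlonglongrightarrow> 0" using tendsto_power[of _ 0 _ 2] by fastforce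
  qed
  then have "(\<lambda>k. sqrt (\<Sum>i\<in>A. (norm (f k i - g i))\<^sup>2)) \<longlonglongrightarrow> sqrt 0" by (rule tendsto_real_sqrt)
  then show ?thesis by (simp add: prod_norm_def)
qed

context
  fixes U :: "nat \<Rightarrow> 'a::{real_inner, complete_space} set" and n :: nat
  assumes n3: "n \<ge> 3" and U_sub: "\<forall>i\<in>{1..n}. subspace (U i) \<and> closed (U i)"
begin

abbreviation "PP \<equiv> (\<lambda>j. orth_proj (U j))"
abbreviation "ZZ \<equiv> (\<Inter>j\<in>{1..n}. U j)"
abbreviation "II \<equiv> {1..n-1}"

lemma Usub: "1 \<le> i \<Longrightarrow> i \<le> n \<Longrightarrow> subspace (U i)" using U_sub by auto
lemma Ucl: "1 \<le> i \<Longrightarrow> i \<le> n \<Longrightarrow> closed (U i)" using U_sub by auto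
lemma Plin: "1 \<le> i \<Longrightarrow> i \<le> n \<Longrightarrow> linear (PP i)" using op_linear Usub Ucl by blast
lemma Porth: "1 \<le> i \<Longrightarrow> i \<le> n \<Longrightarrow> inner (b - PP i b) (PP i b) = 0"
  using op_prop[OF Usub Ucl] by blast
lemma Pin: "1 \<le> i \<Longrightarrow> i \<le> n \<Longrightarrow> PP i b \<in> U i"
  using op_prop[OF Usub Ucl] by blast
lemma Pcont: "1 \<le> i \<Longrightarrow> i \<le> n \<Longrightarrow> isCont (PP i) x"
  using linear_continuous_at[OF op_bounded_linear[OF Usub Ucl]] by blast

lemma Zsub: "subspace ZZ"
  using Usub by (auto simp: subspace_def)
lemma Zcl: "closed ZZ"
  using Ucl by (intro closed_INT) auto
lemma ZU: "1 \<le> i \<Longrightarrow> i \<le> n \<Longrightarrow> ZZ \<subseteq> U i" by auto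
lemma PZlin: "linear (orth_proj ZZ)" by (rule op_linear[OF Zsub Zcl])
lemma PZP: "1 \<le> i \<Longrightarrow> i \<le> n \<Longrightarrow> orth_proj ZZ (PP i x) = orth_proj ZZ x"
  by (rule op_sub[OF Usub Ucl Zsub Zcl ZU])
lemma PZcont: "isCont (orth_proj ZZ) x"
  using linear_continuous_at[OF op_bounded_linear[OF Zsub Zcl]] by blast

lemma PZ_x: "1 \<le> j \<Longrightarrow> j \<le> n - 1 \<Longrightarrow>
  orth_proj ZZ (mt_x PP y j) = orth_proj ZZ (mt_x PP y 1) + orth_proj ZZ (y j) - orth_proj ZZ (y 1)"
proof (induction j)
  case 0 then show ?case by simp
next
  case (Suc j)
  show ?case
  proof (cases j)
    case 0 then show ?thesis by simp
  next
    case (Suc j')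
    have ih: "orth_proj ZZ (mt_x PP y j) = orth_proj ZZ (mt_x PP y 1) + orth_proj ZZ (y j) - orth_proj ZZ (y 1)"
      using Suc.IH Suc.prems Suc by simp
    have xe: "mt_x PP y (Suc j) = PP (Suc j) (mt_x PP y j + y (Suc j) - y j)" using Suc by simp
    have "orth_proj ZZ (mt_x PP y (Suc j)) = orth_proj ZZ (mt_x PP y j + y (Suc j) - y j)"
      unfolding xe by (rule PZP) (use Suc.prems in auto)
    also have "\<dots> = orth_proj ZZ (mt_x PP y j) + orth_proj ZZ (y (Suc j)) - orth_proj ZZ (y j)"
      by (simp only: linear_add[OF PZlin] linear_diff[OF PZlin])
    finally show ?thesis using ih by simp
  qed
qed

lemma PZ_x1: "orth_proj ZZ (mt_x PP y 1) = orth_proj ZZ (y 1)"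
proof -
  have "mt_x PP y 1 = PP 1 (y 1)" by simp
  also have "orth_proj ZZ (PP 1 (y 1)) = orth_proj ZZ (y 1)" by (rule PZP) (use n3 in auto)
  finally show ?thesis .
qed

lemma PZ_Mn: "orth_proj ZZ (mt_M n PP y n) = orth_proj ZZ (mt_M n PP y 1)"
proof -
  have "orth_proj ZZ (mt_M n PP y n) = orth_proj ZZ (PP n (mt_x PP y 1 + mt_x PP y (n-1) - y (n-1)))"
    by (simp add: mt_M_def)
  also have "\<dots> = orth_proj ZZ (mt_x PP y 1 + mt_x PP y (n-1) - y (n-1))"
    by (rule PZP) (use n3 in auto)
  also have "\<dots> = orth_proj ZZ (mt_x PP y 1) + orth_proj ZZ (mt_x PP y (n-1)) - orth_proj ZZ (y (n-1))"
    by (simp only: linear_add[OF PZlin] linear_diff[OF PZlin])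
  also have "\<dots> = orth_proj ZZ (mt_x PP y 1)"
    using PZ_x[of "n-1" y] PZ_x1[of y] n3 by simp
  finally show ?thesis using n3 by (simp add: mt_M_def)
qed

lemma M_in: "1 \<le> i \<Longrightarrow> i \<le> n \<Longrightarrow> mt_M n PP y i \<in> U i"
proof -
  assume i: "1 \<le> i" "i \<le> n"
  show ?thesis
  proof (cases "i = n")
    case True then show ?thesis using i by (simp add: mt_M_def Pin)
  next
    case False
    then obtain j where "i = Suc j" using i by (cases i) auto
    then show ?thesis using False i
      by (cases j) (simp_all add: mt_M_def Pin)
  qed
qed

lemma M_cont:
  assumes c: "\<And>i. 1 \<le> i \<Longrightarrow> i \<le> n - 1 \<Longrightarrow> (\<lambda>k. y k i) \<longlonglongrightarrow> y0 i"
  shows "j \<le> n - 1 \<Longrightarrow> (\<lambda>k. mt_x PP (y k) j) \<longlonglongrightarrow> mt_x PP y0 j"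
proof (induction j)
  case 0 then show ?case by simp
next
  case (Suc j)
  show ?case
  proof (cases j)
    case 0
    have "isCont (PP 1) (y0 1)" by (rule Pcont) (use n3 in auto)
    moreover have "(\<lambda>k. y k 1) \<longlonglongrightarrow> y0 1" by (rule c) (use n3 in auto)
    ultimately have "(\<lambda>k. PP 1 (y k 1)) \<longlonglongrightarrow> PP 1 (y0 1)"
      by (intro isCont_tendsto_compose[where g = "PP 1"])
    then show ?thesis using 0 by simp
  next
    case (Suc j')
    have ih: "(\<lambda>k. mt_x PP (y k) j) \<longlonglongrightarrow> mt_x PP y0 j" using Suc.IH Suc.prems by simp
    have "(\<lambda>k. mt_x PP (y k) j + y k (Suc j) - y k j) \<longlonglongrightarrow> mt_x PP y0 j + y0 (Suc j) - y0 j"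
      by (intro tendsto_intros ih c) (use Suc Suc.prems in auto)
    moreover have "isCont (PP (Suc j)) (mt_x PP y0 j + y0 (Suc j) - y0 j)"
      by (rule Pcont) (use Suc.prems in auto)
    ultimately have "(\<lambda>k. PP (Suc j) (mt_x PP (y k) j + y k (Suc j) - y k j)) \<longlonglongrightarrow> PP (Suc j) (mt_x PP y0 j + y0 (Suc j) - y0 j)"
      by (intro isCont_tendsto_compose[where g = "PP (Suc j)"])
    then show ?thesis using Suc by simp
  qed
qed

lemma M_cont2:
  assumes c: "\<And>i. 1 \<le> i \<Longrightarrow> i \<le> n - 1 \<Longrightarrow> (\<lambda>k. y k i) \<longlonglongrightarrow> y0 i" and i: "i \<le> n"
  shows "(\<lambda>k. mt_M n PP (y k) i) \<longlonglongrightarrow> mt_M n PP y0 i"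
proof (cases "i = n")
  case True
  have "(\<lambda>k. mt_x PP (y k) 1 + mt_x PP (y k) (n-1) - y k (n-1)) \<longlonglongrightarrow> mt_x PP y0 1 + mt_x PP y0 (n-1) - y0 (n-1)"
    by (intro tendsto_intros M_cont c) (use n3 in auto)
  moreover have "isCont (PP n) (mt_x PP y0 1 + mt_x PP y0 (n-1) - y0 (n-1))" by (rule Pcont) (use n3 in auto)
  ultimately have "(\<lambda>k. PP n (mt_x PP (y k) 1 + mt_x PP (y k) (n-1) - y k (n-1))) \<longlonglongrightarrow> PP n (mt_x PP y0 1 + mt_x PP y0 (n-1) - y0 (n-1))"
    by (intro isCont_tendsto_compose[where g = "PP n"])
  then show ?thesis using True by (simp add: mt_M_def)
next
  case False
  then show ?thesis using i by (simp add: mt_M_def M_cont c)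
qed

lemma main_ctx:
  fixes lam :: real and z :: "nat \<Rightarrow> nat \<Rightarrow> 'a"
  assumes lam: "0 < lam" "lam < 1"
    and iter: "\<forall>k. \<forall>i\<in>{1..n-1}.
       z (Suc k) i = (1 - lam) *\<^sub>R z k i + lam *\<^sub>R mt_T n (\<lambda>j. orth_proj (U j)) (z k) i"
  shows "let P = (\<lambda>j. orth_proj (U j));
             Z = (\<Inter>j\<in>{1..n}. U j);
             p = (1 / real (n - 1)) *\<^sub>R (\<Sum>i\<in>{1..n-1}. z 0 i)
         in (\<exists>zbar :: nat \<Rightarrow> 'a.
               (\<lambda>k. prod_norm {1..n-1} (\<lambda>i. z k i - zbar i)) \<longlonglongrightarrow> 0
             \<and> (\<forall>i\<in>{1..n-1}. mt_T n P zbar i = zbar i)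
             \<and> (\<lambda>k. prod_norm {1..n} (\<lambda>i. mt_M n P (z k) i - mt_M n P zbar i)) \<longlonglongrightarrow> 0
             \<and> (\<forall>i\<in>{1..n}. mt_M n P zbar i = orth_proj Z p))
           \<and> (\<forall>k. P 1 (z k 1) = mt_M n P (z k) 1)
           \<and> (\<lambda>k. mt_M n P (z k) 1) \<longlonglongrightarrow> orth_proj Z p
           \<and> orth_proj Z p = (1 / real (n - 1)) *\<^sub>R orth_proj Z (\<Sum>i\<in>{1..n-1}. z 0 i)
           \<and> (\<forall>x0. (\<forall>i\<in>{1..n-1}. z 0 i = x0) \<longrightarrow> (\<lambda>k. P 1 (z k 1)) \<longlonglongrightarrow> orth_proj Z x0)"
proof -
  have fin: "finite II" by simp
  have n2: "n \<ge> 2" using n3 by simp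
  have linP: "\<And>i. 1 \<le> i \<Longrightarrow> i \<le> n \<Longrightarrow> linear (PP i)" by (rule Plin)
  define TT where "TT v = cutfs II (mt_T n PP (app v))" for v :: "'a fs"
  define W where "W k = cutfs II (z k)" for k
  have appTT: "app (TT v) i = (if i \<in> II then mt_T n PP (app v) i else 0)" for v i
    unfolding TT_def by (rule app_cutfs[OF fin])
  have appW: "app (W k) i = (if i \<in> II then z k i else 0)" for k i
    unfolding W_def by (rule app_cutfs[OF fin])
  have linTT: "linear TT"
  proof (rule linearI)
    fix u v :: "'a fs" and c :: real
    show "TT (u + v) = TT u + TT v"
    proof (rule fs_eqI)
      fix i
      have e: "app (u + v) = (\<lambda>j. 1 *\<^sub>R app u j + 1 *\<^sub>R app v j)" by (rule ext) simp
      show "app (TT (u + v)) i = app (TT u + TT v) i"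
      proof (cases "i \<in> II")
        case True
        then have "mt_T n PP (app (u + v)) i = 1 *\<^sub>R mt_T n PP (app u) i + 1 *\<^sub>R mt_T n PP (app v) i"
          unfolding e by (intro mt_T_lin[OF n2 linP]) auto
        then show ?thesis using True by (simp add: appTT)
      next
        case False
        then show ?thesis by (simp only: appTT app_plus app_scaleR if_not_P[OF False] if_False scaleR_zero_right add_0_left)
      qed
    qed
    show "TT (c *\<^sub>R u) = c *\<^sub>R TT u"
    proof (rule fs_eqI)
      fix i
      have e: "app (c *\<^sub>R u) = (\<lambda>j. c *\<^sub>R app u j + 0 *\<^sub>R app u j)" by (rule ext) simp
      show "app (TT (c *\<^sub>R u)) i = app (c *\<^sub>R TT u) i"
      proof (cases "i \<in> II")
        case True
        then have "mt_T n PP (app (c *\<^sub>R u)) i = c *\<^sub>R mt_T n PP (app u) i + 0 *\<^sub>R mt_T n PP (app u) i"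
          unfolding e by (intro mt_T_lin[OF n2 linP]) auto
        then show ?thesis using True by (simp add: appTT)
      next
        case False
        then show ?thesis by (simp only: appTT app_plus app_scaleR if_not_P[OF False] if_False scaleR_zero_right add_0_left)
      qed
    qed
  qed
  have TD: "TT v \<in> DD II" for v by (simp add: DD_def appTT)
  have TD': "\<And>v. v \<in> DD II \<Longrightarrow> TT v \<in> DD II" using TD by blast
  have k0: "n = Suc (Suc (n - 2))" "n - 2 \<ge> 1" using n3 by auto
  have Tne: "norm (TT v) \<le> norm v" if vD: "v \<in> DD II" for v
  proof -
    have "(norm (TT v))\<^sup>2 = (\<Sum>i\<in>II. (norm (app (TT v) i))\<^sup>2)" by (rule norm_DD[OF fin TD])
    also have "\<dots> = (\<Sum>i\<in>II. (norm (mt_T n PP (app v) i))\<^sup>2)" by (intro sum.cong) (auto simp: appTT)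
    also have "\<dots> = (\<Sum>i\<in>II. (norm (app v i))\<^sup>2) - (norm (mt_M n PP (app v) 1 - mt_M n PP (app v) n))\<^sup>2"
      by (rule T_norm[OF k0]) (rule Porth)
    also have "\<dots> \<le> (\<Sum>i\<in>II. (norm (app v i))\<^sup>2)" by simp
    also have "\<dots> = (norm v)\<^sup>2" by (rule norm_DD[OF fin vD, symmetric])
    finally show ?thesis using power2_le_imp_le by simp
  qed
  have W0: "W 0 \<in> DD II" by (simp add: DD_def appW)
  have Wstep: "W (Suc k) = (1 - lam) *\<^sub>R W k + lam *\<^sub>R TT (W k)" for k
  proof (rule fs_eqI)
    fix i
    show "app (W (Suc k)) i = app ((1 - lam) *\<^sub>R W k + lam *\<^sub>R TT (W k)) i"
    proof (cases "i \<in> II")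
      case True
      have "mt_T n PP (app (W k)) i = mt_T n PP (z k) i"
        by (rule mt_T_cong[OF n2]) (use True in \<open>auto simp: appW\<close>)
      then show ?thesis using True iter by (simp add: appW appTT)
    next
      case False
      then show ?thesis by (simp only: appW appTT app_plus app_scaleR if_not_P[OF False] if_False scaleR_zero_right add_0_left)
    qed
  qed
  have "\<exists>wb\<in>DD II. TT wb = wb \<and> W \<longlonglongrightarrow> wb"
  proof (rule avg_conv[where T = TT and D = "DD II :: 'a fs set" and lam = lam and w = W])
    show "linear TT" by (rule linTT)
    show "subspace (DD II :: 'a fs set)" by (rule subspace_DD)
    show "complete (DD II :: 'a fs set)" by (rule complete_DD[OF fin])
    show "TT v \<in> DD II" if "v \<in> DD II" for v by (rule TD)
    show "norm (TT v) \<le> norm v" if "v \<in> DD II" for v using that by (rule Tne)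
    show "0 < lam" "lam < 1" by (rule lam(1), rule lam(2))
    show "W 0 \<in> DD II" by (rule W0)
    show "W (Suc k) = (1 - lam) *\<^sub>R W k + lam *\<^sub>R TT (W k)" for k by (rule Wstep)
  qed
  then obtain wb where wbD: "wb \<in> DD II" and wfix: "TT wb = wb" and wlim: "W \<longlonglongrightarrow> wb"
    by (elim bexE conjE)
  define zbar where "zbar = app wb"
  have zc: "(\<lambda>k. z k i) \<longlonglongrightarrow> zbar i" if "i \<in> II" for i
  proof -
    have "(\<lambda>k. app (W k) i) \<longlonglongrightarrow> app wb i" by (rule bounded_linear.tendsto[OF bl_app wlim])
    then show ?thesis using that by (simp add: appW zbar_def)
  qed
  have c1: "(\<lambda>k. prod_norm II (\<lambda>i. z k i - zbar i)) \<longlonglongrightarrow> 0" by (rule prod_norm_tendsto[OF fin zc])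
  have fixT: "mt_T n PP zbar i = zbar i" if "i \<in> II" for i
  proof -
    have "app (TT wb) i = app wb i" using wfix by simp
    then show ?thesis using that by (simp add: appTT zbar_def)
  qed
  have Mc: "(\<lambda>k. mt_M n PP (z k) i) \<longlonglongrightarrow> mt_M n PP zbar i" if "i \<in> {1..n}" for i
  proof (rule M_cont2)
    show "i \<le> n" using that by simp
    show "(\<lambda>k. z k j) \<longlonglongrightarrow> zbar j" if "1 \<le> j" "j \<le> n - 1" for j using that by (intro zc) simp
  qed
  have c3: "(\<lambda>k. prod_norm {1..n} (\<lambda>i. mt_M n PP (z k) i - mt_M n PP zbar i)) \<longlonglongrightarrow> 0"
    by (rule prod_norm_tendsto[OF finite_atLeastAtMost Mc])
  have Mstep: "mt_M n PP zbar (Suc i) = mt_M n PP zbar i" if "i \<in> II" for i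
    using fixT[OF that] unfolding mt_T_def by simp
  have Mall: "mt_M n PP zbar i = mt_M n PP zbar 1" if "1 \<le> i" "i \<le> n" for i
    using that
  proof (induction i)
    case 0 then show ?case by simp
  next
    case (Suc i)
    show ?case
    proof (cases "i = 0")
      case True then show ?thesis by simp
    next
      case False
      then have "mt_M n PP zbar (Suc i) = mt_M n PP zbar i" using Suc.prems by (intro Mstep) auto
      then show ?thesis using Suc False by simp
    qed
  qed
  define x where "x = mt_M n PP zbar 1"
  have xZ: "x \<in> ZZ"
  proof
    fix j assume j: "j \<in> {1..n}"
    have "mt_M n PP zbar j = x" unfolding x_def using j by (intro Mall) auto
    then show "x \<in> U j" using M_in[of j zbar] j by simp
  qed
  have PZx: "orth_proj ZZ x = x" by (rule op_id[OF Zsub Zcl xZ])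
  have x1: "mt_x PP zbar 1 = x" unfolding x_def using n3 by (simp add: mt_M_def)
  have PZz: "orth_proj ZZ (zbar i) = x" if "i \<in> II" for i
  proof -
    have "i \<noteq> n" using that n3 by auto
    then have "mt_x PP zbar i = mt_M n PP zbar i" by (simp add: mt_M_def)
    also have "\<dots> = x" unfolding x_def using that by (intro Mall) auto
    finally have xi: "mt_x PP zbar i = x" .
    have e: "orth_proj ZZ (mt_x PP zbar i) = orth_proj ZZ (mt_x PP zbar 1) + orth_proj ZZ (zbar i) - orth_proj ZZ (zbar 1)"
      by (rule PZ_x) (use that in auto)
    have a: "orth_proj ZZ (mt_x PP zbar i) = x" unfolding xi by (rule PZx)
    have b: "orth_proj ZZ (mt_x PP zbar 1) = x" unfolding x1 by (rule PZx)
    have c: "orth_proj ZZ (zbar 1) = x" using PZ_x1[of zbar] b by (simp only:)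
    have "x = x + orth_proj ZZ (zbar i) - x" using e unfolding a b c .
    then show ?thesis by simp
  qed
  have sumstep: "(\<Sum>i\<in>II. z (Suc k) i) = (\<Sum>i\<in>II. z k i) + lam *\<^sub>R (mt_M n PP (z k) n - mt_M n PP (z k) 1)" for k
  proof -
    have "(\<Sum>i\<in>II. z (Suc k) i) = (\<Sum>i\<in>II. z k i + lam *\<^sub>R (mt_M n PP (z k) (Suc i) - mt_M n PP (z k) i))"
    proof (rule sum.cong[OF refl])
      fix i assume i: "i \<in> II"
      have "z (Suc k) i = (1 - lam) *\<^sub>R z k i + lam *\<^sub>R mt_T n PP (z k) i" using iter i by blast
      also have "\<dots> = z k i + lam *\<^sub>R (mt_M n PP (z k) (Suc i) - mt_M n PP (z k) i)"
        unfolding mt_T_def by (simp add: algebra_simps)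
      finally show "z (Suc k) i = z k i + lam *\<^sub>R (mt_M n PP (z k) (Suc i) - mt_M n PP (z k) i)" .
    qed
    also have "\<dots> = (\<Sum>i\<in>II. z k i) + lam *\<^sub>R (\<Sum>i\<in>II. mt_M n PP (z k) (Suc i) - mt_M n PP (z k) i)"
      by (simp add: sum.distrib scaleR_sum_right)
    also have "(\<Sum>i\<in>II. mt_M n PP (z k) (Suc i) - mt_M n PP (z k) i) = mt_M n PP (z k) (Suc (n-1)) - mt_M n PP (z k) 1"
      by (rule sum_Suc_diff) simp
    also have "Suc (n - 1) = n" using n3 by simp
    finally show ?thesis .
  qed
  have inv: "orth_proj ZZ (\<Sum>i\<in>II. z k i) = orth_proj ZZ (\<Sum>i\<in>II. z 0 i)" for k
  proof (induction k)
    case (Suc k)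
    have "orth_proj ZZ (\<Sum>i\<in>II. z (Suc k) i) = orth_proj ZZ (\<Sum>i\<in>II. z k i) + lam *\<^sub>R (orth_proj ZZ (mt_M n PP (z k) n) - orth_proj ZZ (mt_M n PP (z k) 1))"
      unfolding sumstep by (simp only: linear_add[OF PZlin] linear_scale[OF PZlin] linear_diff[OF PZlin])
    also have "\<dots> = orth_proj ZZ (\<Sum>i\<in>II. z k i)" using PZ_Mn[of "z k"] by simp
    finally show ?case using Suc.IH by simp
  qed simp
  have "(\<lambda>k. orth_proj ZZ (\<Sum>i\<in>II. z k i)) \<longlonglongrightarrow> orth_proj ZZ (\<Sum>i\<in>II. zbar i)"
    by (intro isCont_tendsto_compose[OF PZcont] tendsto_sum zc)
  moreover have "(\<lambda>k. orth_proj ZZ (\<Sum>i\<in>II. z k i)) = (\<lambda>k. orth_proj ZZ (\<Sum>i\<in>II. z 0 i))"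
    using inv by (intro ext)
  ultimately have cl: "(\<lambda>k. orth_proj ZZ (\<Sum>i\<in>II. z 0 i)) \<longlonglongrightarrow> orth_proj ZZ (\<Sum>i\<in>II. zbar i)" by (simp only:)
  have lim_eq: "orth_proj ZZ (\<Sum>i\<in>II. zbar i) = orth_proj ZZ (\<Sum>i\<in>II. z 0 i)"
    using LIMSEQ_unique[OF tendsto_const cl] by (rule sym)
  have "orth_proj ZZ (\<Sum>i\<in>II. zbar i) = (\<Sum>i\<in>II. orth_proj ZZ (zbar i))" by (rule linear_sum[OF PZlin])
  also have "\<dots> = (\<Sum>i\<in>II. x)" using PZz by (intro sum.cong) auto
  also have "\<dots> = real (n - 1) *\<^sub>R x" by (simp add: sum_constant_scaleR)
  finally have nx: "real (n - 1) *\<^sub>R x = orth_proj ZZ (\<Sum>i\<in>II. z 0 i)" using lim_eq by simp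
  define p where "p = (1 / real (n - 1)) *\<^sub>R (\<Sum>i\<in>II. z 0 i)"
  have plin: "orth_proj ZZ p = (1 / real (n - 1)) *\<^sub>R orth_proj ZZ (\<Sum>i\<in>II. z 0 i)"
    unfolding p_def by (rule linear_scale[OF PZlin])
  have xp: "x = orth_proj ZZ p"
  proof -
    have "real (n - 1) > 0" using n3 by simp
    then show ?thesis unfolding plin nx[symmetric] by simp
  qed
  have M1: "PP 1 (y 1) = mt_M n PP y 1" for y using n3 by (simp add: mt_M_def)
  have c4: "\<forall>i\<in>{1..n}. mt_M n PP zbar i = orth_proj ZZ p"
  proof
    fix i assume "i \<in> {1..n}"
    then have "mt_M n PP zbar i = x" unfolding x_def by (intro Mall) auto
    then show "mt_M n PP zbar i = orth_proj ZZ p" using xp by simp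
  qed
  have c6: "(\<lambda>k. mt_M n PP (z k) 1) \<longlonglongrightarrow> orth_proj ZZ p"
    using Mc[of 1] n3 xp unfolding x_def by simp
  have c8: "(\<lambda>k. PP 1 (z k 1)) \<longlonglongrightarrow> orth_proj ZZ x0" if h: "\<forall>i\<in>II. z 0 i = x0" for x0
  proof -
    have "(\<Sum>i\<in>II. z 0 i) = (\<Sum>i\<in>II. x0)" using h by simp
    also have "\<dots> = real (n - 1) *\<^sub>R x0" by (simp add: sum_constant_scaleR)
    finally have "p = x0" unfolding p_def using n3 by simp
    then show ?thesis using c6 M1 by simp
  qed
  have ex: "\<exists>zbar :: nat \<Rightarrow> 'a.
               (\<lambda>k. prod_norm {1..n-1} (\<lambda>i. z k i - zbar i)) \<longlonglongrightarrow> 0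
             \<and> (\<forall>i\<in>{1..n-1}. mt_T n PP zbar i = zbar i)
             \<and> (\<lambda>k. prod_norm {1..n} (\<lambda>i. mt_M n PP (z k) i - mt_M n PP zbar i)) \<longlonglongrightarrow> 0
             \<and> (\<forall>i\<in>{1..n}. mt_M n PP zbar i = orth_proj ZZ p)"
    by (rule exI[where x = zbar]) (intro conjI c1 c3 c4 ballI fixT; assumption)
  show ?thesis unfolding Let_def p_def[symmetric]
    by (intro conjI ex allI impI c6 plin c8 M1)
qed

end


theorem mainTheorem2:
  fixes U :: "nat \<Rightarrow> 'a::{real_inner, complete_space} set"
    and n :: nat and lam :: real
    and z :: "nat \<Rightarrow> nat \<Rightarrow> 'a"
  assumes n3: "n \<ge> 3"
    and U_sub: "\<forall>i\<in>{1..n}. subspace (U i) \<and> closed (U i)"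
    and lam: "0 < lam" "lam < 1"
    and iter: "\<forall>k. \<forall>i\<in>{1..n-1}.
       z (Suc k) i = (1 - lam) *\<^sub>R z k i + lam *\<^sub>R mt_T n (\<lambda>j. orth_proj (U j)) (z k) i"
  shows "let P = (\<lambda>j. orth_proj (U j));
             Z = (\<Inter>j\<in>{1..n}. U j);
             p = (1 / real (n - 1)) *\<^sub>R (\<Sum>i\<in>{1..n-1}. z 0 i)
         in (\<exists>zbar :: nat \<Rightarrow> 'a.
               (\<lambda>k. prod_norm {1..n-1} (\<lambda>i. z k i - zbar i)) \<longlonglongrightarrow> 0
             \<and> (\<forall>i\<in>{1..n-1}. mt_T n P zbar i = zbar i)
             \<and> (\<lambda>k. prod_norm {1..n} (\<lambda>i. mt_M n P (z k) i - mt_M n P zbar i)) \<longlonglongrightarrow> 0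
             \<and> (\<forall>i\<in>{1..n}. mt_M n P zbar i = orth_proj Z p))
           \<and> (\<forall>k. P 1 (z k 1) = mt_M n P (z k) 1)
           \<and> (\<lambda>k. mt_M n P (z k) 1) \<longlonglongrightarrow> orth_proj Z p
           \<and> orth_proj Z p = (1 / real (n - 1)) *\<^sub>R orth_proj Z (\<Sum>i\<in>{1..n-1}. z 0 i)
           \<and> (\<forall>x0. (\<forall>i\<in>{1..n-1}. z 0 i = x0) \<longrightarrow> (\<lambda>k. P 1 (z k 1)) \<longlonglongrightarrow> orth_proj Z x0)"
    by (rule main_ctx[OF n3 U_sub lam iter])

end
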